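(* Let $\ell$, $n$, $s$ be positive integers with $s\le n$. For a positive integer $\ell'$, let $\mathrm{CAN}(n,\ell';s)$ be the set of $n\times n$ matrices of the block diagonal form $\operatorname{diag}(Q_s, I_{n-s})$, where $Q_s$ is a rational orthogonal matrix of order $s$ and level $\ell'$ each of whose entries is either $0$ or a non-integer rational number, and $I_{n-s}$ is the identity of order $n-s$. Then $$\sum_{\ell'\mid\ell}\big|\mathrm{CAN}(n,\ell';s)\big|\le (2s)^{\ell^2 s}.$$
   Context: A rational orthogonal matrix is a square matrix $Q$ with rational entries and $Q^\top Q=I$. The level of a rational matrix $M$ is the smallest positive integer $\ell$ such that $\ell M$ has integer entries. The sum ranges over all positive divisors $\ell'$ of $\ell$. *)

theory Defs
  imports "Jordan_Normal_Form.Matrix"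
begin

definition integral_mat :: "rat mat \<Rightarrow> bool" where
  "integral_mat M \<longleftrightarrow> (\<forall>i<dim_row M. \<forall>j<dim_col M. M $$ (i,j) \<in> \<int>)"

definition level :: "rat mat \<Rightarrow> nat" where
  "level M = (LEAST l::nat. 0 < l \<and> integral_mat (of_nat l \<cdot>\<^sub>m M))"

definition rat_orthogonal :: "nat \<Rightarrow> rat mat \<Rightarrow> bool" where
  "rat_orthogonal s Q \<longleftrightarrow> Q \<in> carrier_mat s s \<and> transpose_mat Q * Q = 1\<^sub>m s"

definition CAN :: "nat \<Rightarrow> nat \<Rightarrow> nat \<Rightarrow> rat mat set" where
  "CAN n l s = {four_block_mat Q (0\<^sub>m s (n - s)) (0\<^sub>m (n - s) s) (1\<^sub>m (n - s)) | Q.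
      rat_orthogonal s Q \<and> level Q = l \<and>
      (\<forall>i<s. \<forall>j<s. Q $$ (i,j) = 0 \<or> Q $$ (i,j) \<notin> \<int>)}"

end

theory Submission
  imports Defs
begin

lemma rat_common_denom:
  fixes Q :: "rat mat"
  shows "\<exists>k::nat. 0 < k \<and> integral_mat (of_nat k \<cdot>\<^sub>m Q)"
proof -
  define d where "d = (\<lambda>p. nat (snd (quotient_of (Q $$ p))))"
  define I where "I = {..<dim_row Q} \<times> {..<dim_col Q}"
  define D where "D = prod d I"
  have fin: "finite I" unfolding I_def by simp
  have dpos: "\<And>p. 0 < d p" unfolding d_def
    by (metis prod.collapse quotient_of_denom_pos zero_less_nat_eq)
  have "0 < D" unfolding D_def using dpos by (simp add: prod_pos)
  moreover have "integral_mat (of_nat D \<cdot>\<^sub>m Q)"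
    unfolding integral_mat_def
  proof (intro allI impI)
    fix i j assume ij: "i < dim_row (of_nat D \<cdot>\<^sub>m Q)" "j < dim_col (of_nat D \<cdot>\<^sub>m Q)"
    hence p: "(i,j) \<in> I" unfolding I_def by simp
    obtain a b where ab: "quotient_of (Q $$ (i,j)) = (a,b)" by fastforce
    have b0: "0 < b" using ab quotient_of_denom_pos by blast
    have q: "Q $$ (i,j) = of_int a / of_int b" using ab quotient_of_div by blast
    have db: "d (i,j) = nat b" unfolding d_def ab snd_conv by (rule refl)
    define R where "R = prod d (I - {(i,j)})"
    have "D = d (i,j) * R" unfolding D_def R_def using prod.remove[OF fin p] by simp
    hence Dr: "(of_nat D :: rat) = of_int b * of_nat R" using db b0 by simp
    have bnz: "(of_int b :: rat) \<noteq> 0" using b0 by simp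
    have "of_nat D * Q $$ (i,j) = of_nat R * of_int a"
      unfolding Dr q using bnz by simp
    moreover have "(of_nat D \<cdot>\<^sub>m Q) $$ (i,j) = of_nat D * Q $$ (i,j)" using ij by simp
    ultimately show "(of_nat D \<cdot>\<^sub>m Q) $$ (i,j) \<in> \<int>" by simp
  qed
  ultimately show ?thesis by blast
qed

lemma level_integral:
  assumes "level Q = l'" 
  shows "integral_mat (of_nat l' \<cdot>\<^sub>m Q)" "0 < l'"
proof -
  have "0 < level Q \<and> integral_mat (of_nat (level Q) \<cdot>\<^sub>m Q)"
    unfolding level_def using rat_common_denom[of Q] by (rule LeastI_ex)
  thus "integral_mat (of_nat l' \<cdot>\<^sub>m Q)" "0 < l'" using assms by auto
qed

lemma integral_dvd:
  assumes "integral_mat (of_nat a \<cdot>\<^sub>m Q)" "a dvd b"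
  shows "integral_mat (of_nat b \<cdot>\<^sub>m Q)"
  unfolding integral_mat_def
proof (intro allI impI)
  fix i j assume ij: "i < dim_row (of_nat b \<cdot>\<^sub>m Q)" "j < dim_col (of_nat b \<cdot>\<^sub>m Q)"
  obtain c where c: "b = a * c" using assms(2) by blast
  have "of_nat a * Q $$ (i,j) \<in> \<int>" using assms(1) ij unfolding integral_mat_def by auto
  hence "of_nat c * (of_nat a * Q $$ (i,j)) \<in> \<int>" by simp
  thus "(of_nat b \<cdot>\<^sub>m Q) $$ (i,j) \<in> \<int>" using ij c by (simp add: ac_simps)
qed

lemma col_norm:
  fixes Q :: "rat mat"
  assumes "Q \<in> carrier_mat s s" "transpose_mat Q * Q = 1\<^sub>m s" "j < s"
  shows "(\<Sum>i<s. Q $$ (i,j) ^ 2) = 1"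
proof -
  have "(transpose_mat Q * Q) $$ (j,j) = 1" using assms by simp
  moreover have "(transpose_mat Q * Q) $$ (j,j) = (\<Sum>i<s. Q $$ (i,j) ^ 2)"
    using assms(1,3) by (simp add: scalar_prod_def power2_eq_square atLeast0LessThan)
  ultimately show ?thesis by simp
qed

definition code :: "nat \<Rightarrow> (nat \<Rightarrow> int) \<Rightarrow> (nat \<times> bool) list" where
  "code s z = concat (map (\<lambda>i. replicate (nat (z i ^ 2)) (i, 0 \<le> z i)) [0..<s])"

lemma code_length: "length (code s z) = nat (\<Sum>i<s. z i ^ 2)"
  unfolding code_def by (induction s) (auto simp: nat_add_distrib sum_nonneg)

lemma code_set: "set (code s z) \<subseteq> {0..<s} \<times> UNIV"
  unfolding code_def by auto

lemma code_set_iff: "(i, b) \<in> set (code s z) \<longleftrightarrow> i < s \<and> z i \<noteq> 0 \<and> b = (0 \<le> z i)"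
  unfolding code_def by auto

lemma code_Suc: "code (Suc s) z = code s z @ replicate (nat (z s ^ 2)) (s, 0 \<le> z s)"
  unfolding code_def by simp

lemma code_0: "code 0 z = []"
  unfolding code_def by simp

lemma code_filter_gen:
  "length (filter (\<lambda>p. fst p = i) (code s z)) = (if i < s then nat (z i ^ 2) else 0)"
proof (induction s)
  case 0 then show ?case by (simp add: code_0)
next
  case (Suc s)
  then show ?case by (cases "i = s") (simp_all add: code_Suc filter_replicate)
qed

lemma code_filter: "i < s \<Longrightarrow> length (filter (\<lambda>p. fst p = i) (code s z)) = nat (z i ^ 2)"
  using code_filter_gen[of i s z] by simp

lemma code_inj:
  assumes "code s z = code s w" "i < s"
  shows "z i = w i"
proof -
  have "nat (z i ^ 2) = nat (w i ^ 2)"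
    using code_filter[of i s z, OF assms(2)] code_filter[of i s w, OF assms(2)] assms(1) by simp
  hence sq: "z i ^ 2 = w i ^ 2" by (simp add: eq_nat_nat_iff)
  show ?thesis
  proof (cases "z i = 0")
    case True thus ?thesis using sq by simp
  next
    case False
    have "(i, 0 \<le> z i) \<in> set (code s z)" using code_set_iff[of i "0 \<le> z i" s z] False assms(2) by simp
    hence "(i, 0 \<le> z i) \<in> set (code s w)" using assms(1) by simp
    hence "w i \<noteq> 0 \<and> (0 \<le> z i) = (0 \<le> w i)" using code_set_iff[of i "0 \<le> z i" s w] by simp
    moreover have "z i = w i \<or> z i = - w i" using sq by (simp add: power2_eq_iff)
    ultimately show ?thesis by linarith
  qed
qed

definition Fb :: "nat \<Rightarrow> nat \<Rightarrow> rat mat \<Rightarrow> rat mat" where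
  "Fb n s Q = four_block_mat Q (0\<^sub>m s (n - s)) (0\<^sub>m (n - s) s) (1\<^sub>m (n - s))"

lemma Fb_inj:
  assumes "Q1 \<in> carrier_mat s s" "Q2 \<in> carrier_mat s s" "Fb n s Q1 = Fb n s Q2"
  shows "Q1 = Q2"
proof (rule eq_matI)
  fix i j assume ij: "i < dim_row Q2" "j < dim_col Q2"
  have ij': "i < s" "j < s" using ij assms(2) by auto
  have "Fb n s Q1 $$ (i,j) = Q1 $$ (i,j)" if "Q1 \<in> carrier_mat s s" for Q1
    unfolding Fb_def using that ij' by (subst index_mat_four_block) simp_all
  thus "Q1 $$ (i,j) = Q2 $$ (i,j)" using assms by metis
qed (use assms(1,2) in simp_all)

lemma int_floor_eq: "(x::rat) \<in> \<int> \<Longrightarrow> of_int \<lfloor>x\<rfloor> = x"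
  by (metis Ints_cases floor_of_int)

theorem mainTheorem4:
  fixes l n s :: nat
  assumes "0 < l" and "0 < n" and "0 < s" and "s \<le> n"
  shows "(\<Sum>l'\<in>{l'. 0 < l' \<and> l' dvd l}. card (CAN n l' s)) \<le> (2 * s) ^ (l\<^sup>2 * s)"
proof -
  define S where "S = {Q. Q \<in> carrier_mat s s \<and> transpose_mat Q * Q = 1\<^sub>m s \<and> integral_mat (of_nat l \<cdot>\<^sub>m Q)}"
  define enc where "enc = (\<lambda>Q::rat mat. \<lambda>j\<in>{0..<s}. code s (\<lambda>i. \<lfloor>of_nat l * Q $$ (i,j)\<rfloor>))"
  define B where "B = {xs. set xs \<subseteq> {0..<s} \<times> (UNIV::bool set) \<and> length xs = l^2}"
  define T where "T = PiE {0..<s} (\<lambda>_. B)"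
  have finB: "finite B" unfolding B_def by (intro finite_lists_length_eq) auto
  have cardB: "card B = (2*s) ^ (l^2)" unfolding B_def
    by (subst card_lists_length_eq) (auto simp: card_cartesian_product)
  have finT: "finite T" unfolding T_def using finB by (intro finite_PiE) auto
  have cardT: "card T = (2 * s) ^ (l\<^sup>2 * s)" unfolding T_def
    by (simp add: card_PiE cardB power_mult)
  have entry: "of_int \<lfloor>of_nat l * Q $$ (i,j)\<rfloor> = of_nat l * Q $$ (i,j)"
    if "Q \<in> S" "i < s" "j < s" for Q i j
  proof -
    have "(of_nat l \<cdot>\<^sub>m Q) $$ (i,j) \<in> \<int>" using that unfolding S_def integral_mat_def by auto
    hence "of_nat l * Q $$ (i,j) \<in> \<int>" using that unfolding S_def by auto
    thus ?thesis by (rule int_floor_eq)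
  qed
  have encT: "enc ` S \<subseteq> T"
  proof
    fix x assume "x \<in> enc ` S"
    then obtain Q where Q: "Q \<in> S" "x = enc Q" by blast
    have "code s (\<lambda>i. \<lfloor>of_nat l * Q $$ (i,j)\<rfloor>) \<in> B" if j: "j < s" for j
    proof -
      let ?z = "\<lambda>i. \<lfloor>of_nat l * Q $$ (i,j)\<rfloor>"
      have "(of_int (\<Sum>i<s. ?z i ^ 2) :: rat) = (\<Sum>i<s. (of_nat l * Q $$ (i,j)) ^ 2)"
        unfolding of_int_sum by (intro sum.cong refl) (metis entry[OF Q(1) _ j] of_int_power lessThan_iff)
      also have "\<dots> = of_nat l ^ 2 * (\<Sum>i<s. Q $$ (i,j) ^ 2)"
        by (simp add: power_mult_distrib sum_distrib_left)
      also have "\<dots> = of_nat l ^ 2" using col_norm[of Q s j] Q(1) j unfolding S_def by simp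
      finally have "(\<Sum>i<s. ?z i ^ 2) = int l ^ 2"
        by (metis of_int_eq_iff of_int_of_nat_eq of_int_power)
      hence "length (code s ?z) = l^2" by (simp add: code_length nat_power_eq)
      thus ?thesis unfolding B_def using code_set by auto
    qed
    thus "x \<in> T" unfolding Q(2) enc_def T_def by auto
  qed
  have injS: "inj_on enc S"
  proof
    fix Q1 Q2 assume Q: "Q1 \<in> S" "Q2 \<in> S" "enc Q1 = enc Q2"
    show "Q1 = Q2"
    proof (rule eq_matI)
      fix i j assume ij: "i < dim_row Q2" "j < dim_col Q2"
      hence ij': "i < s" "j < s" using Q unfolding S_def by auto
      have "enc Q1 j = enc Q2 j" using Q by simp
      hence "code s (\<lambda>i. \<lfloor>of_nat l * Q1 $$ (i,j)\<rfloor>) = code s (\<lambda>i. \<lfloor>of_nat l * Q2 $$ (i,j)\<rfloor>)"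
        using ij' unfolding enc_def by simp
      hence "\<lfloor>of_nat l * Q1 $$ (i,j)\<rfloor> = \<lfloor>of_nat l * Q2 $$ (i,j)\<rfloor>"
        using code_inj ij' by blast
      hence "of_nat l * Q1 $$ (i,j) = of_nat l * Q2 $$ (i,j)"
        using entry[OF Q(1) ij'] entry[OF Q(2) ij'] by metis
      thus "Q1 $$ (i,j) = Q2 $$ (i,j)" using assms(1) by simp
    qed (use Q in \<open>auto simp: S_def\<close>)
  qed
  have cardS: "card S \<le> card T" and finS: "finite S"
    using card_inj_on_le[OF injS encT finT] finite_imageD[OF finite_subset[OF encT finT] injS] by auto
  define D where "D = {l'. 0 < l' \<and> l' dvd l}"
  have "D \<subseteq> {..l}" unfolding D_def using assms(1) by (auto dest: dvd_imp_le)
  hence finD: "finite D" using finite_subset by blast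
  have sub: "CAN n l' s \<subseteq> Fb n s ` S" if "l' \<in> D" for l'
  proof
    fix M assume "M \<in> CAN n l' s"
    then obtain Q where Q: "M = Fb n s Q" "rat_orthogonal s Q" "level Q = l'"
      unfolding CAN_def Fb_def by blast
    have "integral_mat (of_nat l \<cdot>\<^sub>m Q)"
      using integral_dvd[OF level_integral(1)[OF Q(3)]] that unfolding D_def by auto
    hence "Q \<in> S" using Q(2) unfolding S_def rat_orthogonal_def by auto
    thus "M \<in> Fb n s ` S" using Q(1) by blast
  qed
  have finFS: "finite (Fb n s ` S)" using finS by simp
  have disj: "CAN n a s \<inter> CAN n b s = {}" if "a \<noteq> b" for a b
  proof (rule ccontr)
    assume "CAN n a s \<inter> CAN n b s \<noteq> {}"
    then obtain M where "M \<in> CAN n a s" "M \<in> CAN n b s" by blast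
    then obtain Q1 Q2 where "M = Fb n s Q1" "rat_orthogonal s Q1" "level Q1 = a"
      "M = Fb n s Q2" "rat_orthogonal s Q2" "level Q2 = b"
      unfolding CAN_def Fb_def by blast
    hence "Q1 = Q2" using Fb_inj unfolding rat_orthogonal_def by metis
    thus False using that \<open>level Q1 = a\<close> \<open>level Q2 = b\<close> by simp
  qed
  have "(\<Sum>l'\<in>D. card (CAN n l' s)) = card (\<Union>l'\<in>D. CAN n l' s)"
  proof (rule card_UN_disjoint[symmetric, OF finD])
    show "\<forall>l'\<in>D. finite (CAN n l' s)" using sub finFS finite_subset by blast
    show "\<forall>i\<in>D. \<forall>j\<in>D. i \<noteq> j \<longrightarrow> CAN n i s \<inter> CAN n j s = {}" using disj by blast
  qed
  also have "\<dots> \<le> card (Fb n s ` S)" using sub finFS by (intro card_mono) auto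
  also have "\<dots> \<le> card S" by (rule card_image_le[OF finS])
  also have "\<dots> \<le> (2 * s) ^ (l\<^sup>2 * s)" using cardS cardT by simp
  finally show ?thesis unfolding D_def .
qed

end
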